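(* Let $\eta_0\in[0,1]$ and let $p(X_i,X_j|M_{ij},P)$, for $(ij)\in\{(12),(23),(13)\}$ and $X_i,X_j\in\{0,1\}$, be arbitrary probability distributions on $\{0,1\}^2$; set $w_{12}=p(X_1\neq X_2|M_{12},P)$, $w_{23}=p(X_2\neq X_3|M_{23},P)$, $w_{13}=p(X_1\neq X_3|M_{13},P)$. Then at most one of the following four inequalities can hold: $w_{12}+w_{23}+w_{13}>3-\eta_0$; $w_{12}-w_{23}-w_{13}>1-\eta_0$; $w_{23}-w_{13}-w_{12}>1-\eta_0$; $w_{13}-w_{12}-w_{23}>1-\eta_0$. That is, no such set of distributions violates two of the four noncontextuality inequalities $R_3\le 3-\eta_0$, $R_0\le 1-\eta_0$, $R_1\le1-\eta_0$, $R_2\le 1-\eta_0$ simultaneously.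
   Context: Here $p(X_i\neq X_j|M_{ij},P)=p(0,1|M_{ij},P)+p(1,0|M_{ij},P)$ is the probability of anticorrelated outcomes in the joint measurement $M_{ij}$, and $R_3=w_{12}+w_{23}+w_{13}$, $R_0=w_{12}-w_{23}-w_{13}$, $R_1=w_{23}-w_{13}-w_{12}$, $R_2=w_{13}-w_{12}-w_{23}$. The number $\eta_0$ plays the role of the common predictability of the three binary measurements. *)

theory Defs
  imports "HOL-Probability.Probability_Mass_Function"
begin

text \<open>Outcomes of a joint measurement M_ij are pairs (X_i, X_j) in {0,1}^2, encoded as
  bool \<times> bool (False = 0, True = 1).\<close>

definition anticorr :: "(bool \<times> bool) pmf \<Rightarrow> real" where
  "anticorr p = measure_pmf.prob p {x. fst x \<noteq> snd x}"

end

theory Submission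
  imports Defs
begin

lemma anticorr_bounds: "0 \<le> anticorr p \<and> anticorr p \<le> 1"
  unfolding anticorr_def by simp

theorem mainTheorem5:
  fixes \<eta>0 :: real and p12 p23 p13 :: "(bool \<times> bool) pmf"
  assumes "0 \<le> \<eta>0" and "\<eta>0 \<le> 1"
  defines "w12 \<equiv> anticorr p12" and "w23 \<equiv> anticorr p23" and "w13 \<equiv> anticorr p13"
  shows "length (filter id
           [w12 + w23 + w13 > 3 - \<eta>0,
            w12 - w23 - w13 > 1 - \<eta>0,
            w23 - w13 - w12 > 1 - \<eta>0,
            w13 - w12 - w23 > 1 - \<eta>0]) \<le> 1"
proof -
  have b: "0 \<le> w12" "w12 \<le> 1" "0 \<le> w23" "w23 \<le> 1" "0 \<le> w13" "w13 \<le> 1"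
    using anticorr_bounds unfolding w12_def w23_def w13_def by auto
  show ?thesis using b assms(1,2) by (auto split: if_splits)
qed

end
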